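(* Let $\Omega\subseteq\mathcal{A}_n$ be a closed set which is uniformly transversally star-shaped with respect to $S\in\mathcal{A}_n$. Then for every compact set $K\subseteq\mathcal{A}_n$, $\sup\langle n,S-R\rangle<0,$ where the supremum is taken over all $R\in K\cap\partial\Omega$ and all $n\in\mathcal{A}_n$ with $\|n\|=1$ and $\langle n,v\rangle\le0$ for all $v\in T_R\Omega$.
   Context: $\mathcal{A}_n$ is the (finite-dimensional Euclidean) space of algebraic curvature tensors on $\mathbb{R}^n$, with scalar product $\langle R,S\rangle=\mathrm{tr}(R\circ S)$. Tangent cone: $T_R\Omega:=\overline{\{\dot\gamma(0)\mid\gamma:(-\epsilon,\epsilon)\to\mathcal{A}_n\ \mathcal C^1,\ \gamma(0)=R,\ \gamma(t)\in\Omega\ \forall t\in[0,\epsilon)\}}$. A closed $\Omega$ is uniformly transversally star-shaped with respect to $S$ if for every compact $K\subseteq\mathcal{A}_n$ there is $r>0$ such that for every $R\in K\cap\partial\Omega$ there is $\varepsilon_0>0$ with $R+\varepsilon B_r(S-R)\subseteq\Omega$ for all $\varepsilon\in[0,\varepsilon_0)$, $B_r(v)$ the open ball of radius $r$ around $v$. *)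

theory Defs
  imports "HOL-Analysis.Analysis"
begin

type_synonym 'n tensor4 = "real^'n^'n^'n^'n"

definition alg_curv :: "('n::finite) tensor4 set" where
  "alg_curv = {R.
     (\<forall>i j k l. R$i$j$k$l = - (R$j$i$k$l)) \<and>
     (\<forall>i j k l. R$i$j$k$l = - (R$i$j$l$k)) \<and>
     (\<forall>i j k l. R$i$j$k$l = R$k$l$i$j) \<and>
     (\<forall>i j k l. R$i$j$k$l + R$j$k$i$l + R$k$i$j$l = 0)}"

text \<open>Scalar product tr(R o S), R and S viewed as operators on Lambda^2 R^n with the
  orthonormal basis e_i wedge e_j (i<j): this equals one quarter of the full contraction.\<close>
definition ac_inner :: "('n::finite) tensor4 \<Rightarrow> 'n tensor4 \<Rightarrow> real" where
  "ac_inner R S = (R \<bullet> S) / 4"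

definition ac_norm :: "('n::finite) tensor4 \<Rightarrow> real" where
  "ac_norm R = sqrt (ac_inner R R)"

definition ac_ball :: "real \<Rightarrow> ('n::finite) tensor4 \<Rightarrow> 'n tensor4 set" where
  "ac_ball r v = {w \<in> alg_curv. ac_norm (w - v) < r}"

definition ac_boundary :: "('n::finite) tensor4 set \<Rightarrow> 'n tensor4 set" where
  "ac_boundary \<Omega> = (top_of_set alg_curv) frontier_of \<Omega>"

definition tangent_cone :: "('n::finite) tensor4 set \<Rightarrow> 'n tensor4 \<Rightarrow> 'n tensor4 set" where
  "tangent_cone \<Omega> R = closure {v. \<exists>\<epsilon>>0. \<exists>\<gamma> \<gamma>'.
      (\<forall>t\<in>{-\<epsilon><..<\<epsilon>}. \<gamma> t \<in> alg_curv \<and> (\<gamma> has_vector_derivative \<gamma>' t) (at t)) \<and>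
      continuous_on {-\<epsilon><..<\<epsilon>} \<gamma>' \<and>
      \<gamma> 0 = R \<and> (\<forall>t\<in>{0..<\<epsilon>}. \<gamma> t \<in> \<Omega>) \<and> v = \<gamma>' 0}"

definition unif_transv_star_shaped :: "('n::finite) tensor4 set \<Rightarrow> 'n tensor4 \<Rightarrow> bool" where
  "unif_transv_star_shaped \<Omega> S \<longleftrightarrow>
     (\<forall>K. compact K \<and> K \<subseteq> alg_curv \<longrightarrow>
        (\<exists>r>0. \<forall>R\<in>K \<inter> ac_boundary \<Omega>. \<exists>\<epsilon>0>0. \<forall>\<epsilon>\<in>{0..<\<epsilon>0}.
            (\<lambda>w. R + \<epsilon> *\<^sub>R w) ` ac_ball r (S - R) \<subseteq> \<Omega>))"

end

theory Submission
  imports Defs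
begin

lemma alg_curv_add: assumes "a \<in> alg_curv" "b \<in> alg_curv" shows "a + b \<in> alg_curv"
proof -
  have A: "\<And>i j k l. a$i$j$k$l = - (a$j$i$k$l)" "\<And>i j k l. a$i$j$k$l = - (a$i$j$l$k)"
    "\<And>i j k l. a$i$j$k$l = a$k$l$i$j" "\<And>i j k l. a$i$j$k$l + a$j$k$i$l + a$k$i$j$l = 0"
    using assms(1) unfolding alg_curv_def by blast+
  have B: "\<And>i j k l. b$i$j$k$l = - (b$j$i$k$l)" "\<And>i j k l. b$i$j$k$l = - (b$i$j$l$k)"
    "\<And>i j k l. b$i$j$k$l = b$k$l$i$j" "\<And>i j k l. b$i$j$k$l + b$j$k$i$l + b$k$i$j$l = 0"
    using assms(2) unfolding alg_curv_def by blast+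
  show ?thesis unfolding alg_curv_def
  proof (intro CollectI conjI allI)
    fix i j k l
    show "(a + b)$i$j$k$l = - ((a + b)$j$i$k$l)" using A(1)[of i j k l] B(1)[of i j k l] by simp
    show "(a + b)$i$j$k$l = - ((a + b)$i$j$l$k)" using A(2)[of i j k l] B(2)[of i j k l] by simp
    show "(a + b)$i$j$k$l = (a + b)$k$l$i$j" using A(3)[of i j k l] B(3)[of i j k l] by simp
    show "(a + b)$i$j$k$l + (a + b)$j$k$i$l + (a + b)$k$i$j$l = 0"
      using A(4)[of i j k l] B(4)[of i j k l] by simp
  qed
qed

lemma alg_curv_scale: assumes "a \<in> alg_curv" shows "c *\<^sub>R a \<in> alg_curv"
proof -
  have A: "\<And>i j k l. a$i$j$k$l = - (a$j$i$k$l)" "\<And>i j k l. a$i$j$k$l = - (a$i$j$l$k)"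
    "\<And>i j k l. a$i$j$k$l = a$k$l$i$j" "\<And>i j k l. a$i$j$k$l + a$j$k$i$l + a$k$i$j$l = 0"
    using assms(1) unfolding alg_curv_def by blast+
  show ?thesis unfolding alg_curv_def
  proof (intro CollectI conjI allI)
    fix i j k l
    show "(c *\<^sub>R a)$i$j$k$l = - ((c *\<^sub>R a)$j$i$k$l)" using A(1)[of i j k l] by simp
    show "(c *\<^sub>R a)$i$j$k$l = - ((c *\<^sub>R a)$i$j$l$k)" using A(2)[of i j k l] by simp
    show "(c *\<^sub>R a)$i$j$k$l = (c *\<^sub>R a)$k$l$i$j" using A(3)[of i j k l] by simp
    have "c * (a$i$j$k$l + a$j$k$i$l + a$k$i$j$l) = 0" using A(4)[of i j k l] by simp
    then show "(c *\<^sub>R a)$i$j$k$l + (c *\<^sub>R a)$j$k$i$l + (c *\<^sub>R a)$k$i$j$l = 0"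
      by (simp add: distrib_left)
  qed
qed

lemma alg_curv_diff: "a \<in> alg_curv \<Longrightarrow> b \<in> alg_curv \<Longrightarrow> a - b \<in> alg_curv"
  using alg_curv_add[of a "(-1) *\<^sub>R b"] alg_curv_scale[of b "-1"] by simp

lemma tangent_mem:
  assumes "R \<in> alg_curv" "w \<in> alg_curv" "e0 > 0" "\<forall>e\<in>{0..<e0}. R + e *\<^sub>R w \<in> \<Omega>"
  shows "w \<in> tangent_cone \<Omega> R"
proof -
  define g where "g = (\<lambda>t::real. R + t *\<^sub>R w)"
  define g' where "g' = (\<lambda>t::real. w)"
  have 1: "\<forall>t\<in>{-e0<..<e0}. g t \<in> alg_curv \<and> (g has_vector_derivative g' t) (at t)"
  proof
    fix t assume "t \<in> {-e0<..<e0}"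
    have "g t \<in> alg_curv" unfolding g_def by (rule alg_curv_add[OF assms(1) alg_curv_scale[OF assms(2)]])
    moreover have "(g has_vector_derivative g' t) (at t)"
    proof -
      have "((\<lambda>t. t *\<^sub>R w) has_vector_derivative w) (at t)"
        using has_vector_derivative_scaleR[OF DERIV_ident has_vector_derivative_const[of w]]
        by simp
      then have "((\<lambda>t. R + t *\<^sub>R w) has_vector_derivative 0 + w) (at t)"
        by (intro has_vector_derivative_add has_vector_derivative_const)
      then show ?thesis unfolding g_def g'_def by simp
    qed
    ultimately show "g t \<in> alg_curv \<and> (g has_vector_derivative g' t) (at t)" by blast
  qed
  have 2: "continuous_on {-e0<..<e0} g'" unfolding g'_def by (rule continuous_on_const)
  have 3: "g 0 = R" unfolding g_def by simp
  have 4: "\<forall>t\<in>{0..<e0}. g t \<in> \<Omega>" unfolding g_def using assms(4) by blast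
  have 5: "w = g' 0" unfolding g'_def by simp
  have "w \<in> {v. \<exists>\<epsilon>>0. \<exists>\<gamma> \<gamma>'.
      (\<forall>t\<in>{-\<epsilon><..<\<epsilon>}. \<gamma> t \<in> alg_curv \<and> (\<gamma> has_vector_derivative \<gamma>' t) (at t)) \<and>
      continuous_on {-\<epsilon><..<\<epsilon>} \<gamma>' \<and>
      \<gamma> 0 = R \<and> (\<forall>t\<in>{0..<\<epsilon>}. \<gamma> t \<in> \<Omega>) \<and> v = \<gamma>' 0}"
    unfolding mem_Collect_eq
    apply (rule exI[of _ e0])
    apply (rule conjI[OF assms(3)])
    apply (rule exI[of _ g], rule exI[of _ g'])
    using 1 2 3 4 5 by (intro conjI)
  then show ?thesis unfolding tangent_cone_def by (rule subsetD[OF closure_subset])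
qed

theorem lemma4p7:
  fixes \<Omega> :: "('n::finite) tensor4 set" and S :: "'n tensor4" and K :: "'n tensor4 set"
  assumes "\<Omega> \<subseteq> alg_curv" and "closed \<Omega>" and "S \<in> alg_curv"
    and "unif_transv_star_shaped \<Omega> S"
    and "compact K" and "K \<subseteq> alg_curv"
  shows "(SUP (R, N) \<in> {(R, N). R \<in> K \<inter> ac_boundary \<Omega> \<and> N \<in> alg_curv \<and> ac_norm N = 1 \<and>
              (\<forall>v\<in>tangent_cone \<Omega> R. ac_inner N v \<le> 0)}.
            ereal (ac_inner N (S - R))) < 0"
proof -
  obtain r where r: "r > 0" and rK: "\<forall>R\<in>K \<inter> ac_boundary \<Omega>. \<exists>\<epsilon>0>0. \<forall>\<epsilon>\<in>{0..<\<epsilon>0}.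
            (\<lambda>w. R + \<epsilon> *\<^sub>R w) ` ac_ball r (S - R) \<subseteq> \<Omega>"
    using assms(4)[unfolded unif_transv_star_shaped_def, rule_format, OF conjI[OF assms(5,6)]] by blast
  have bound: "ac_inner N (S - R) \<le> - (r/2)"
    if R: "R \<in> K \<inter> ac_boundary \<Omega>" and N: "N \<in> alg_curv" "ac_norm N = 1"
      and T: "\<forall>v\<in>tangent_cone \<Omega> R. ac_inner N v \<le> 0" for R N
  proof -
    have RA: "R \<in> alg_curv" using R assms(6) by auto
    obtain e0 where e0: "e0 > 0" "\<forall>\<epsilon>\<in>{0..<e0}. (\<lambda>w. R + \<epsilon> *\<^sub>R w) ` ac_ball r (S - R) \<subseteq> \<Omega>"
      using bspec[OF rK R] by blast
    have NN: "ac_inner N N = 1"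
    proof -
      have "N \<bullet> N \<ge> 0" by simp
      then show ?thesis using N(2) unfolding ac_norm_def ac_inner_def
        by (metis real_sqrt_eq_1_iff)
    qed
    define w where "w = S - R + (r/2) *\<^sub>R N"
    have wA: "w \<in> alg_curv" unfolding w_def
      by (intro alg_curv_add alg_curv_diff alg_curv_scale assms(3) RA N(1))
    have "ac_norm (w - (S - R)) = r/2"
    proof -
      have "ac_inner (w - (S - R)) (w - (S - R)) = (r/2)^2 * ac_inner N N"
        unfolding w_def ac_inner_def by (simp add: power2_eq_square)
      then show ?thesis unfolding ac_norm_def using NN r by simp
    qed
    then have "w \<in> ac_ball r (S - R)" unfolding ac_ball_def using wA r by simp
    then have "\<forall>e\<in>{0..<e0}. R + e *\<^sub>R w \<in> \<Omega>"
    proof (intro ballI)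
      fix e assume "e \<in> {0..<e0}" and wb: "w \<in> ac_ball r (S - R)"
      have "R + e *\<^sub>R w \<in> (\<lambda>w. R + e *\<^sub>R w) ` ac_ball r (S - R)" by (rule imageI[OF wb])
      then show "R + e *\<^sub>R w \<in> \<Omega>" using e0(2) \<open>e \<in> {0..<e0}\<close> by blast
    qed
    then have "w \<in> tangent_cone \<Omega> R" by (rule tangent_mem[OF RA wA e0(1)])
    then have "ac_inner N w \<le> 0" using T by blast
    moreover have "ac_inner N w = ac_inner N (S - R) + r/2 * ac_inner N N"
      unfolding w_def ac_inner_def by (simp add: inner_add_right add_divide_distrib)
    ultimately show ?thesis using NN by simp
  qed
  have "(SUP (R, N) \<in> {(R, N). R \<in> K \<inter> ac_boundary \<Omega> \<and> N \<in> alg_curv \<and> ac_norm N = 1 \<and>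
              (\<forall>v\<in>tangent_cone \<Omega> R. ac_inner N v \<le> 0)}.
            ereal (ac_inner N (S - R))) \<le> ereal (- (r/2))"
    apply (rule SUP_least)
    apply clarify
    apply simp
    apply (rule bound)
    by auto
  also have "\<dots> < 0" using r by simp
  finally show ?thesis .
qed

end
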